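(* Let $\Delta$ be an integer with $\Delta\ge 3$ and let $\varepsilon_{\Delta} = \tan(\pi/(4 (\Delta-1)))$ (so $\varepsilon_\Delta\in(0,1)$). Let $G = (V, E)$ be a graph of maximum degree at most $\Delta$. Then $Z_{\mathrm{Ising}}(G; \beta) \ne 0$ for every $\beta \in \mathbb{C}$ with $\lvert \beta - 1\rvert / \lvert \beta + 1 \rvert \le \varepsilon_\Delta$.
   Context: Graphs are undirected and may have multiple edges or loops. For a graph $G=(V,E)$ and $\beta\in\mathbb{C}$, the partition function of the Ising model is $Z_{\mathrm{Ising}}(G;\beta)=\sum_{\sigma\colon V\to\{0,1\}}\beta^{m(\sigma)}$, where $m(\sigma)$ is the number of edges of $G$ whose two endpoints receive the same value under $\sigma$ (monochromatic edges). *)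

theory Defs
  imports "HOL-Analysis.Analysis"
begin

definition is_multigraph :: "'v set \<Rightarrow> 'e set \<Rightarrow> ('e \<Rightarrow> 'v \<times> 'v) \<Rightarrow> bool" where
  "is_multigraph V E ends \<longleftrightarrow> finite V \<and> finite E \<and>
     (\<forall>e\<in>E. fst (ends e) \<in> V \<and> snd (ends e) \<in> V)"

text \<open>Degree of a vertex; a loop contributes 2.\<close>
definition degree :: "'e set \<Rightarrow> ('e \<Rightarrow> 'v \<times> 'v) \<Rightarrow> 'v \<Rightarrow> nat" where
  "degree E ends v = card {e\<in>E. fst (ends e) = v} + card {e\<in>E. snd (ends e) = v}"

definition mono_edges :: "'e set \<Rightarrow> ('e \<Rightarrow> 'v \<times> 'v) \<Rightarrow> ('v \<Rightarrow> nat) \<Rightarrow> nat" where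
  "mono_edges E ends \<sigma> = card {e\<in>E. \<sigma> (fst (ends e)) = \<sigma> (snd (ends e))}"

definition Z_Ising :: "'v set \<Rightarrow> 'e set \<Rightarrow> ('e \<Rightarrow> 'v \<times> 'v) \<Rightarrow> complex \<Rightarrow> complex" where
  "Z_Ising V E ends \<beta> = (\<Sum>\<sigma>\<in>(V \<rightarrow>\<^sub>E {0::nat, 1}). \<beta> ^ mono_edges E ends \<sigma>)"

end

theory Submission
  imports Defs
begin

definition sect :: "real \<Rightarrow> complex \<Rightarrow> bool" where
  "sect g w \<longleftrightarrow> (\<exists>r th. r > 0 \<and> \<bar>th\<bar> \<le> g \<and> w = complex_of_real r * cis th)"

lemma sect_mult: "sect a w \<Longrightarrow> sect b z \<Longrightarrow> sect (a + b) (w * z)"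
  unfolding sect_def
proof (elim exE conjE)
  fix r1 t1 r2 t2 assume "r1 > 0" "\<bar>t1\<bar> \<le> a" "w = complex_of_real r1 * cis t1"
    "r2 > 0" "\<bar>t2\<bar> \<le> b" "z = complex_of_real r2 * cis t2"
  then show "\<exists>r th. r > 0 \<and> \<bar>th\<bar> \<le> a + b \<and> w * z = complex_of_real r * cis th"
    by (intro exI[of _ "r1*r2"] exI[of _ "t1+t2"]) (auto simp: cis_mult[symmetric] algebra_simps)
qed

lemma sect_mono: "sect a w \<Longrightarrow> a \<le> b \<Longrightarrow> sect b w"
  unfolding sect_def by force

lemma sect_one: "0 \<le> a \<Longrightarrow> sect a 1"
  unfolding sect_def by (intro exI[of _ 1] exI[of _ 0]) auto

lemma sect_nz: "sect a w \<Longrightarrow> w \<noteq> 0"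
  unfolding sect_def by auto

lemma sect_re: "sect (pi/2) w \<Longrightarrow> Re w \<ge> 0"
  unfolding sect_def
proof (elim exE conjE)
  fix r th assume "r > 0" "\<bar>th\<bar> \<le> pi/2" "w = complex_of_real r * cis th"
  then show "Re w \<ge> 0" by (simp add: cos_ge_zero)
qed

lemma sect_plus1: "sect a w \<Longrightarrow> a < pi \<Longrightarrow> 1 + w \<noteq> 0"
  unfolding sect_def
proof (elim exE conjE)
  fix r th assume h: "r > 0" "\<bar>th\<bar> \<le> a" "w = complex_of_real r * cis th" "a < pi"
  show "1 + w \<noteq> 0"
  proof
    assume "1 + w = 0"
    then have "Im w = 0" "Re w = -1" by (auto simp: complex_eq_iff)
    then have "r * sin th = 0" "r * cos th = -1" using h by auto
    then have "sin th = 0" using h by simp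
    then have "th = 0" using sin_zero_pi_iff[of th] h by linarith
    then show False using \<open>r * cos th = -1\<close> h by simp
  qed
qed

lemma polar_re_pos:
  assumes "Re w > 0"
  shows "w = complex_of_real (cmod w) * cis (arctan (Im w / Re w))"
proof -
  have s: "sqrt (1 + (Im w / Re w)\<^sup>2) = cmod w / Re w"
  proof -
    have "1 + (Im w / Re w)\<^sup>2 = ((Re w)\<^sup>2 + (Im w)\<^sup>2) / (Re w)\<^sup>2"
      using assms by (simp add: field_simps)
    then have "sqrt (1 + (Im w / Re w)\<^sup>2) = sqrt ((Re w)\<^sup>2 + (Im w)\<^sup>2) / \<bar>Re w\<bar>"
      by (simp add: real_sqrt_divide)
    then show ?thesis using assms by (simp add: cmod_def)
  qed
  have "w \<noteq> 0" using assms by auto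
  then have cw: "cmod w > 0" by simp
  have c: "cos (arctan (Im w / Re w)) = Re w / cmod w"
    unfolding cos_arctan s using assms cw by simp
  have sn: "sin (arctan (Im w / Re w)) = Im w / cmod w"
    unfolding sin_arctan s using assms cw by simp
  show ?thesis using cw by (simp add: complex_eq_iff c sn)
qed

lemma moeb:
  assumes a0: "0 < a" and a1: "a < pi/2" and x: "cmod x \<le> tan (a/2)"
  shows "sect a ((1 + x) / (1 - x))"
proof -
  define e where "e = tan (a/2)"
  have e0: "0 < e" unfolding e_def using a0 a1 by (intro tan_gt_zero) auto
  have e1: "e < 1"
  proof -
    have "tan (a/2) < tan (pi/4)" using a0 a1 by (intro tan_monotone) auto
    then show ?thesis by (simp add: e_def tan_45)
  qed
  have ta: "tan a = 2 * e / (1 - e\<^sup>2)"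
  proof -
    have "cos (a/2) \<noteq> 0" using a0 a1 by (intro order.strict_implies_not_eq[symmetric] cos_gt_zero) auto
    moreover have "cos (2 * (a/2)) \<noteq> 0"
      using a0 a1 by (intro order.strict_implies_not_eq[symmetric] cos_gt_zero) auto
    ultimately show ?thesis using tan_double[of "a/2"] by (simp add: e_def)
  qed
  define p where "p = Re x"
  define q where "q = Im x"
  have s2: "p\<^sup>2 + q\<^sup>2 \<le> e\<^sup>2"
  proof -
    have "cmod x ^ 2 \<le> e ^ 2" using x e_def by (simp add: power_mono)
    then show ?thesis by (simp add: p_def q_def cmod_power2)
  qed
  have e2: "e\<^sup>2 < 1" using e0 e1 by (simp add: power_less_one_iff)
  define w where "w = (1 + x) / (1 - x)"
  define d where "d = (1 - p)\<^sup>2 + q\<^sup>2"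
  have p1: "p\<^sup>2 < 1" using s2 e2 by (smt (verit) zero_le_power2)
  have "p < 1"
  proof (rule ccontr)
    assume "\<not> p < 1" then have "1 \<le> p" by simp
    then have "1 * 1 \<le> p * p" by (intro mult_mono) auto
    then show False using p1 by (simp add: power2_eq_square)
  qed
  then have d0: "d > 0" unfolding d_def by (smt (verit) zero_less_power2 zero_le_power2)
  have rew: "Re w = (1 - p\<^sup>2 - q\<^sup>2) / d" "Im w = 2 * q / d"
    unfolding w_def d_def p_def q_def by (simp_all add: Re_divide Im_divide power2_eq_square algebra_simps)
  have rpos: "Re w > 0" using rew d0 s2 e2 by simp
  have pq: "1 - p\<^sup>2 - q\<^sup>2 > 0" using s2 e2 by simp
  have yr: "Im w / Re w = 2 * q / (1 - p\<^sup>2 - q\<^sup>2)" unfolding rew using d0 pq by (simp add: field_simps)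
  define s where "s = sqrt (p\<^sup>2 + q\<^sup>2)"
  have s0: "0 \<le> s" unfolding s_def by simp
  have ss: "s\<^sup>2 = p\<^sup>2 + q\<^sup>2" unfolding s_def by simp
  have se: "s \<le> e" unfolding s_def using s2 e0 by (simp add: real_le_lsqrt)
  have qs: "\<bar>q\<bar> \<le> s" unfolding s_def by (simp add: real_le_rsqrt)
  have s1: "s\<^sup>2 < 1" using ss s2 e2 by simp
  have "\<bar>Im w / Re w\<bar> = 2 * \<bar>q\<bar> / (1 - s\<^sup>2)"
    using yr ss s1 by (simp add: abs_divide abs_mult diff_diff_eq)
  also have "\<dots> \<le> 2 * s / (1 - s\<^sup>2)"
    using qs s1 by (intro divide_right_mono) auto
  also have "\<dots> \<le> 2 * e / (1 - e\<^sup>2)"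
  proof -
    have "2 * s * (1 - e\<^sup>2) \<le> 2 * e * (1 - s\<^sup>2)"
    proof -
      have "2 * e * (1 - s\<^sup>2) - 2 * s * (1 - e\<^sup>2) = 2 * (e - s) * (1 + s * e)"
        by (simp add: power2_eq_square algebra_simps)
      also have "\<dots> \<ge> 0" using se s0 e0 by simp
      finally show ?thesis by simp
    qed
    then show ?thesis using s1 e2 by (simp add: field_simps)
  qed
  finally have yb: "\<bar>Im w / Re w\<bar> \<le> tan a" using ta by simp
  have "\<bar>arctan (Im w / Re w)\<bar> \<le> a"
  proof -
    have ta': "arctan (tan a) = a" using a0 a1 arctan_tan[of a] by simp
    have "arctan (Im w / Re w) \<le> arctan (tan a)" using abs_le_D1[OF yb] by (simp only: arctan_le_iff)
    moreover have "arctan (- tan a) \<le> arctan (Im w / Re w)" using abs_le_D2[OF yb] by (simp only: arctan_le_iff)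
    ultimately show ?thesis using ta' arctan_minus[of "tan a"] by linarith
  qed
  moreover have "w \<noteq> 0" using rpos by auto
  then have "cmod w > 0" by simp
  ultimately show ?thesis unfolding sect_def w_def[symmetric]
    using polar_re_pos[OF rpos] by blast
qed


definition endp :: "('e \<Rightarrow> 'v \<times> 'v) \<Rightarrow> 'e \<times> bool \<Rightarrow> 'v" where
  "endp ends h = (if snd h then fst (ends (fst h)) else snd (ends (fst h)))"

definition spin :: "'v set \<Rightarrow> ('e \<Rightarrow> 'v \<times> 'v) \<Rightarrow> ('e \<times> bool \<Rightarrow> nat) \<Rightarrow> ('v \<Rightarrow> nat) \<Rightarrow> 'e \<times> bool \<Rightarrow> nat" where
  "spin V ends val \<sigma> h = (if endp ends h \<in> V then \<sigma> (endp ends h) else val h)"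

definition wt :: "complex \<Rightarrow> nat \<Rightarrow> nat \<Rightarrow> complex" where
  "wt b x y = (if x = y then b else 1)"

definition WW :: "complex \<Rightarrow> 'v set \<Rightarrow> 'e set \<Rightarrow> ('e \<Rightarrow> 'v \<times> 'v) \<Rightarrow> ('e \<times> bool \<Rightarrow> nat) \<Rightarrow> complex" where
  "WW b V E ends val = (\<Sum>\<sigma>\<in>V \<rightarrow>\<^sub>E {0::nat,1}. \<Prod>e\<in>E. wt b (spin V ends val \<sigma> (e,True)) (spin V ends val \<sigma> (e,False)))"

definition upd :: "('e \<Rightarrow> 'v \<times> 'v) \<Rightarrow> ('e \<times> bool \<Rightarrow> nat) \<Rightarrow> 'v \<Rightarrow> nat \<Rightarrow> 'e \<times> bool \<Rightarrow> nat" where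
  "upd ends val u c = (\<lambda>h. if endp ends h = u then c else val h)"

lemma wt_sym: "wt b x y = wt b y x"
  unfolding wt_def by auto

lemma WW_cong:
  assumes "\<And>e s. e \<in> E \<Longrightarrow> endp ends (e,s) \<notin> V \<Longrightarrow> val (e,s) = val' (e,s)"
  shows "WW b V E ends val = WW b V E ends val'"
proof -
  have "\<And>\<sigma> e s. e \<in> E \<Longrightarrow> spin V ends val \<sigma> (e,s) = spin V ends val' \<sigma> (e,s)"
    unfolding spin_def using assms by auto
  then show ?thesis unfolding WW_def by (intro sum.cong prod.cong refl) auto
qed

lemma spin_ins:
  assumes "x \<notin> V'"
  shows "spin (insert x V') ends val (g(x := y)) h = spin V' ends (upd ends val x y) g h"
  using assms unfolding spin_def upd_def by auto

lemma WW_split: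
  assumes fV: "finite V" and xV: "x \<in> V"
  shows "WW b V E ends val = WW b (V - {x}) E ends (upd ends val x 0) + WW b (V - {x}) E ends (upd ends val x 1)"
proof -
  define V' where "V' = V - {x}"
  have VV: "V = insert x V'" and xV': "x \<notin> V'" using xV unfolding V'_def by auto
  define F where "F = (\<lambda>W vl \<sigma>. \<Prod>e\<in>E. wt b (spin W ends vl \<sigma> (e,True)) (spin W ends vl \<sigma> (e,False)))"
  have "WW b V E ends val = (\<Sum>\<sigma>\<in>(\<lambda>(y, g). g(x := y)) ` ({0::nat,1} \<times> (V' \<rightarrow>\<^sub>E {0::nat,1})). F V val \<sigma>)"
    unfolding WW_def F_def VV PiE_insert_eq by simp
  also have "\<dots> = (\<Sum>p\<in>{0::nat,1} \<times> (V' \<rightarrow>\<^sub>E {0::nat,1}). F V val ((\<lambda>(y, g). g(x := y)) p))"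
    by (rule sum.reindex[unfolded comp_def]) (rule inj_combinator[OF xV'])
  also have "\<dots> = (\<Sum>y\<in>{0::nat,1}. \<Sum>g\<in>V' \<rightarrow>\<^sub>E {0::nat,1}. F V val (g(x := y)))"
    by (simp add: sum.cartesian_product split_def)
  also have "\<dots> = (\<Sum>y\<in>{0::nat,1}. \<Sum>g\<in>V' \<rightarrow>\<^sub>E {0::nat,1}. F V' (upd ends val x y) g)"
    unfolding F_def VV spin_ins[OF xV'] by simp
  also have "\<dots> = WW b V' E ends (upd ends val x 0) + WW b V' E ends (upd ends val x 1)"
    unfolding WW_def F_def by simp
  finally show ?thesis unfolding V'_def .
qed

lemma WW_factor:
  assumes fE: "finite E" and eE: "e \<in> E" and h1: "endp ends (e,True) \<notin> V" and h2: "endp ends (e,False) \<notin> V"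
  shows "WW b V E ends val = wt b (val (e,True)) (val (e,False)) * WW b V (E - {e}) ends val"
  unfolding WW_def sum_distrib_left
proof (rule sum.cong[OF refl])
  fix \<sigma>
  show "(\<Prod>e\<in>E. wt b (spin V ends val \<sigma> (e, True)) (spin V ends val \<sigma> (e, False))) =
         wt b (val (e, True)) (val (e, False)) * (\<Prod>e\<in>E - {e}. wt b (spin V ends val \<sigma> (e, True)) (spin V ends val \<sigma> (e, False)))"
    using h1 h2 by (subst prod.remove[OF fE eE]) (simp add: spin_def)
qed

lemma WW_empty:
  assumes "finite E" "b \<noteq> 0"
  shows "WW b {} E ends val \<noteq> 0"
  using assms unfolding WW_def by (simp add: prod_zero_iff wt_def)

lemma card_rm: "finite E \<Longrightarrow> e \<in> E \<Longrightarrow> P e \<Longrightarrow> card {x\<in>E - {e}. P x} + 1 = card {x\<in>E. P x}"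
proof -
  assume a: "finite E" "e \<in> E" "P e"
  have "{x\<in>E. P x} = insert e {x\<in>E - {e}. P x}" using a by auto
  then show ?thesis using a by simp
qed

lemma card_rm_le: "finite E \<Longrightarrow> card {x\<in>E - {e}. P x} \<le> card {x\<in>E. P x}"
  by (rule card_mono) auto

lemma deg_mono: assumes "finite E" shows "degree (E - {e}) ends x \<le> degree E ends x"
  unfolding degree_def by (intro add_mono card_rm_le[OF assms])

lemma deg_drop:
  assumes fE: "finite E" and eE: "e \<in> E" and ex: "endp ends (e,s) = x"
  shows "degree (E - {e}) ends x + 1 \<le> degree E ends x"
proof (cases s)
  case True
  then have "fst (ends e) = x" using ex by (simp add: endp_def)
  then have "card {y\<in>E - {e}. fst (ends y) = x} + 1 = card {y\<in>E. fst (ends y) = x}"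
    by (rule card_rm[OF fE eE, of "\<lambda>y. fst (ends y) = x"])
  then show ?thesis unfolding degree_def using card_rm_le[OF fE, of e "\<lambda>y. snd (ends y) = x"] by linarith
next
  case False
  then have "snd (ends e) = x" using ex by (simp add: endp_def)
  then have "card {y\<in>E - {e}. snd (ends y) = x} + 1 = card {y\<in>E. snd (ends y) = x}"
    by (rule card_rm[OF fE eE, of "\<lambda>y. snd (ends y) = x"])
  then show ?thesis unfolding degree_def using card_rm_le[OF fE, of e "\<lambda>y. fst (ends y) = x"] by linarith
qed

lemma card_H:
  assumes fE: "finite E"
  shows "card {h. fst h \<in> E \<and> endp ends h = u} = degree E ends u"
proof -
  have eq: "{h. fst h \<in> E \<and> endp ends h = u} =
    (\<lambda>e. (e,True)) ` {e\<in>E. fst (ends e) = u} \<union> (\<lambda>e. (e,False)) ` {e\<in>E. snd (ends e) = u}"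
    by (auto simp: endp_def split: if_splits)
  have "card ((\<lambda>e. (e,True)) ` {e\<in>E. fst (ends e) = u} \<union> (\<lambda>e. (e,False)) ` {e\<in>E. snd (ends e) = u})
      = card ((\<lambda>e. (e,True)) ` {e\<in>E. fst (ends e) = u}) + card ((\<lambda>e. (e,False)) ` {e\<in>E. snd (ends e) = u})"
    using fE by (intro card_Un_disjoint) auto
  also have "\<dots> = degree E ends u"
    unfolding degree_def by (subst card_image, simp add: inj_on_def)+ simp
  finally show ?thesis using eq by simp
qed


context
  fixes D :: nat and al :: real and t b :: complex
  assumes D3: "D \<ge> 3" and al: "al = pi / (2 * (real D - 1))"
    and tle: "cmod t \<le> tan (al/2)" and bt: "b = (1 + t) / (1 - t)"
begin

lemma D1: "real D - 1 \<ge> 2" using D3 by simp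

lemma al_pos: "0 < al" using D1 al by simp

lemma al_D1: "(real D - 1) * al = pi/2" using D1 al by (simp add: field_simps)

lemma al_le: "al \<le> pi/4"
proof -
  have "2 * al \<le> (real D - 1) * al" using D1 al_pos by (intro mult_right_mono) auto
  then show ?thesis using al_D1 by simp
qed

lemma al_D: "real D * al < pi"
proof -
  have "real D * al = (real D - 1) * al + al" by (simp add: algebra_simps)
  then show ?thesis using al_D1 al_le pi_gt_zero by linarith
qed

lemma t_small: "cmod t < 1"
proof -
  have "tan (al/2) < tan (pi/4)" using al_pos al_le by (intro tan_monotone) auto
  then show ?thesis using tle by (simp add: tan_45)
qed

lemma t_ne: "1 - t \<noteq> 0" "1 + t \<noteq> 0"
proof -
  show "1 - t \<noteq> 0"
  proof
    assume "1 - t = 0" then have "t = 1" by simp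
    then show False using t_small by simp
  qed
  show "1 + t \<noteq> 0"
  proof
    assume "1 + t = 0" then have "t = -1" by (simp add: add_eq_0_iff)
    then show False using t_small by simp
  qed
qed

lemma b_nz: "b \<noteq> 0" using t_ne bt by simp

lemma al_lt: "al < pi/2" using al_le pi_gt_zero by linarith

lemma sect_b: "sect al b" unfolding bt by (rule moeb[OF al_pos al_lt tle])

lemma sect_binv: "sect al (1 / b)"
proof -
  have "1 / b = (1 + (- t)) / (1 - (- t))" using bt t_ne by simp
  moreover have "sect al ((1 + (- t)) / (1 - (- t)))" by (rule moeb[OF al_pos al_lt]) (simp add: tle)
  ultimately show ?thesis by simp
qed

lemma sect_wt: "sect al (wt b 0 c / wt b 1 c)"
  using sect_b sect_binv sect_one[of al] al_pos by (auto simp: wt_def)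

lemma sect_f:
  assumes Y1: "Y1 \<noteq> 0" and ReR: "Re (Y0 / Y1) \<ge> 0"
  shows "sect al ((b * Y0 + Y1) / (Y0 + b * Y1))"
proof -
  define R where "R = Y0 / Y1"
  have Y0: "Y0 = R * Y1" using Y1 unfolding R_def by simp
  have ReR': "Re R \<ge> 0" using ReR unfolding R_def .
  have R1: "R + 1 \<noteq> 0"
  proof
    assume "R + 1 = 0" then have "Re (R + 1) = 0" by simp
    then show False using ReR R_def by simp
  qed
  define m where "m = (R - 1) / (R + 1)"
  have "cmod (R + 1) ^ 2 - cmod (R - 1) ^ 2 = 4 * Re R"
    unfolding cmod_power2 by (simp add: power2_eq_square algebra_simps)
  then have "cmod (R - 1) ^ 2 \<le> cmod (R + 1) ^ 2" using ReR' by linarith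
  then have "cmod (R - 1) \<le> cmod (R + 1)" by (rule power2_le_imp_le) simp
  then have m1: "cmod m \<le> 1" unfolding m_def using R1 by (simp add: norm_divide divide_le_eq_1)
  have tmt: "cmod (t * m) \<le> cmod t"
  proof -
    have "cmod (t * m) = cmod t * cmod m" by (simp add: norm_mult)
    also have "\<dots> \<le> cmod t * 1" using m1 by (intro mult_left_mono) auto
    finally show ?thesis by simp
  qed
  then have tm: "cmod (t * m) \<le> tan (al/2)" using tle by linarith
  have tm1: "1 - t * m \<noteq> 0"
  proof
    assume "1 - t * m = 0" then have "t * m = 1" by simp
    then have "cmod (t * m) = 1" by simp
    then show False using tmt t_small by linarith
  qed
  have bb: "b * (1 - t) = 1 + t" using t_ne bt by simp
  define N where "N = (R + 1) + t * (R - 1)"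
  define Dn where "Dn = (R + 1) - t * (R - 1)"
  have "(b * Y0 + Y1) * (1 - t) = (b * (1 - t)) * Y0 + (1 - t) * Y1" by (simp add: algebra_simps)
  also have "\<dots> = (1 + t) * (R * Y1) + (1 - t) * Y1" using bb Y0 by simp
  also have "\<dots> = Y1 * N" unfolding N_def by (simp add: algebra_simps)
  finally have n1: "(b * Y0 + Y1) * (1 - t) = Y1 * N" .
  have "(Y0 + b * Y1) * (1 - t) = (1 - t) * Y0 + (b * (1 - t)) * Y1" by (simp add: algebra_simps)
  also have "\<dots> = (1 - t) * (R * Y1) + (1 + t) * Y1" using bb Y0 by simp
  also have "\<dots> = Y1 * Dn" unfolding Dn_def by (simp add: algebra_simps)
  finally have d1: "(Y0 + b * Y1) * (1 - t) = Y1 * Dn" .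
  have tmR: "t * m * (R + 1) = t * (R - 1)" unfolding m_def using R1 by simp
  have n2: "(1 + t * m) * (R + 1) = N" unfolding N_def using tmR by (simp add: algebra_simps)
  have d2: "(1 - t * m) * (R + 1) = Dn" unfolding Dn_def using tmR by (simp add: algebra_simps)
  have "(b * Y0 + Y1) / (Y0 + b * Y1) = ((b * Y0 + Y1) * (1 - t)) / ((Y0 + b * Y1) * (1 - t))"
    using t_ne by simp
  also have "\<dots> = N / Dn" unfolding n1 d1 using Y1 by simp
  also have "\<dots> = (1 + t * m) / (1 - t * m)" unfolding n2[symmetric] d2[symmetric] using R1 by simp
  finally have "(b * Y0 + Y1) / (Y0 + b * Y1) = (1 + t * m) / (1 - t * m)" .
  then show ?thesis using moeb[OF al_pos al_lt tm] by simp
qed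

lemma step:
  assumes IH: "\<And>V' E' val'. finite V' \<Longrightarrow> finite E' \<Longrightarrow> card V' < n \<Longrightarrow> (\<forall>x\<in>V'. degree E' ends x \<le> D) \<Longrightarrow>
      WW b V' E' ends val' \<noteq> 0 \<and> (\<forall>u\<in>V'. WW b (V' - {u}) E' ends (upd ends val' u 1) \<noteq> 0 \<and>
        sect (real (degree E' ends u) * al) (WW b (V' - {u}) E' ends (upd ends val' u 0) / WW b (V' - {u}) E' ends (upd ends val' u 1)))"
  and fV: "finite V" and fE: "finite E" and cV: "card V < n" and dV: "\<forall>x\<in>V. degree E ends x \<le> D"
  and eE: "e \<in> E" and hV: "endp ends (e,s) \<notin> V"
  shows "sect al (WW b V E ends (val((e,s):=0)) / WW b V E ends (val((e,s):=1)))"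
proof -
  have fE': "finite (E - {e})" using fE by simp
  have dV': "\<forall>x\<in>V. degree (E - {e}) ends x \<le> D"
  proof
    fix x assume "x \<in> V"
    then have "degree E ends x \<le> D" using dV by blast
    moreover have "degree (E - {e}) ends x \<le> degree E ends x" by (rule deg_mono[OF fE])
    ultimately show "degree (E - {e}) ends x \<le> D" by linarith
  qed
  show ?thesis
  proof (cases "endp ends (e, \<not> s) \<in> V")
    case False
    define c where "c = val (e, \<not> s)"
    have fac: "WW b V E ends (val((e,s):=a)) = wt b a c * WW b V (E - {e}) ends val" for a
    proof -
      have "WW b V E ends (val((e,s):=a)) = wt b ((val((e,s):=a)) (e,True)) ((val((e,s):=a)) (e,False)) * WW b V (E - {e}) ends (val((e,s):=a))"
      proof -
        have n1: "endp ends (e,True) \<notin> V" "endp ends (e,False) \<notin> V"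
          using hV False by (cases s; auto)+
        show ?thesis by (rule WW_factor[OF fE eE n1])
      qed
      also have "WW b V (E - {e}) ends (val((e,s):=a)) = WW b V (E - {e}) ends val" by (rule WW_cong) auto
      also have "wt b ((val((e,s):=a)) (e,True)) ((val((e,s):=a)) (e,False)) = wt b a c"
        unfolding c_def by (cases s) (auto simp: wt_def)
      finally show ?thesis .
    qed
    have nz: "WW b V (E - {e}) ends val \<noteq> 0" using IH[OF fV fE' cV dV'] by blast
    show ?thesis using fac[of 0] fac[of 1] nz sect_wt[of c] by simp
  next
    case True
    define x where "x = endp ends (e, \<not> s)"
    have xV: "x \<in> V" using True x_def by simp
    have hx: "endp ends (e,s) \<noteq> x" using hV xV by auto
    define Y where "Y c = WW b (V - {x}) (E - {e}) ends (upd ends val x c)" for c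
    have spl: "WW b V E ends (val((e,s):=a)) = wt b a 0 * Y 0 + wt b a 1 * Y 1" for a
    proof -
      have fc: "WW b (V - {x}) E ends (upd ends (val((e,s):=a)) x c) = wt b a c * Y c" for c
      proof -
        have n1: "endp ends (e,True) \<notin> V - {x}" "endp ends (e,False) \<notin> V - {x}"
          using hV x_def by (cases s; auto)+
        have "WW b (V - {x}) E ends (upd ends (val((e,s):=a)) x c) =
          wt b ((upd ends (val((e,s):=a)) x c) (e,True)) ((upd ends (val((e,s):=a)) x c) (e,False)) *
          WW b (V - {x}) (E - {e}) ends (upd ends (val((e,s):=a)) x c)"
          by (rule WW_factor[OF fE eE n1])
        also have "wt b ((upd ends (val((e,s):=a)) x c) (e,True)) ((upd ends (val((e,s):=a)) x c) (e,False)) = wt b a c"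
          using hx x_def by (cases s) (auto simp: upd_def wt_def)
        also have "WW b (V - {x}) (E - {e}) ends (upd ends (val((e,s):=a)) x c) = Y c"
          unfolding Y_def by (rule WW_cong) (auto simp: upd_def)
        finally show ?thesis .
      qed
      show ?thesis using WW_split[OF fV xV, of b E ends "val((e,s):=a)"] fc[of 0] fc[of 1] by simp
    qed
    have IHx: "Y 1 \<noteq> 0 \<and> sect (real (degree (E - {e}) ends x) * al) (Y 0 / Y 1)"
      using IH[OF fV fE' cV dV'] xV unfolding Y_def by blast
    have "degree (E - {e}) ends x + 1 \<le> degree E ends x" using deg_drop[OF fE eE x_def[symmetric]] .
    moreover have "degree E ends x \<le> D" using dV xV by blast
    ultimately have "degree (E - {e}) ends x + 1 \<le> D" by linarith
    then have "real (degree (E - {e}) ends x) \<le> real D - 1" by linarith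
    then have "real (degree (E - {e}) ends x) * al \<le> (real D - 1) * al" using al_pos
      by (intro mult_right_mono) auto
    then have "real (degree (E - {e}) ends x) * al \<le> pi/2" using al_D1 by linarith
    then have "sect (pi/2) (Y 0 / Y 1)" using IHx sect_mono by blast
    then have "Re (Y 0 / Y 1) \<ge> 0" by (rule sect_re)
    then have "sect al ((b * Y 0 + Y 1) / (Y 0 + b * Y 1))" using sect_f IHx by blast
    then show ?thesis using spl[of 0] spl[of 1] by (simp add: wt_def)
  qed
qed

lemma main_n:
  "\<forall>V E val. card V = n \<longrightarrow> finite V \<longrightarrow> finite E \<longrightarrow> (\<forall>x\<in>V. degree E ends x \<le> D) \<longrightarrow>
      WW b V E ends val \<noteq> 0 \<and> (\<forall>u\<in>V. WW b (V - {u}) E ends (upd ends val u 1) \<noteq> 0 \<and>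
        sect (real (degree E ends u) * al) (WW b (V - {u}) E ends (upd ends val u 0) / WW b (V - {u}) E ends (upd ends val u 1)))"
proof (induction n rule: less_induct)
  case (less n)
  have IH: "finite V' \<Longrightarrow> finite E' \<Longrightarrow> card V' < n \<Longrightarrow> (\<forall>x\<in>V'. degree E' ends x \<le> D) \<Longrightarrow>
      WW b V' E' ends val' \<noteq> 0 \<and> (\<forall>u\<in>V'. WW b (V' - {u}) E' ends (upd ends val' u 1) \<noteq> 0 \<and>
        sect (real (degree E' ends u) * al) (WW b (V' - {u}) E' ends (upd ends val' u 0) / WW b (V' - {u}) E' ends (upd ends val' u 1)))" for V' E' val'
    using less.IH[of "card V'"] by blast
  show ?case
  proof (intro allI impI)
    fix V :: "'a set" and E :: "'b set" and val
    assume cV: "card V = n" and fV: "finite V" and fE: "finite E" and dV: "\<forall>x\<in>V. degree E ends x \<le> D"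
    have part2: "WW b (V - {u}) E ends (upd ends val u 1) \<noteq> 0 \<and>
        sect (real (degree E ends u) * al) (WW b (V - {u}) E ends (upd ends val u 0) / WW b (V - {u}) E ends (upd ends val u 1))"
      if uV: "u \<in> V" for u
    proof -
      define V' where "V' = V - {u}"
      have "card V' < card V" unfolding V'_def using fV uV by (rule card_Diff1_less)
      then have cV': "card V' < n" using cV by simp
      have fV': "finite V'" using fV unfolding V'_def by simp
      have dV': "\<forall>x\<in>V'. degree E ends x \<le> D" using dV unfolding V'_def by simp
      have uV': "u \<notin> V'" unfolding V'_def by simp
      define H where "H = {h. fst h \<in> E \<and> endp ends h = u}"
      define vS where "vS S = (\<lambda>h. if endp ends h = u then (if h \<in> S then 1 else 0) else val h)" for S :: "('b \<times> bool) set"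
      have fH: "finite H"
      proof -
        have "H \<subseteq> E \<times> (UNIV :: bool set)" unfolding H_def by auto
        moreover have "finite (E \<times> (UNIV :: bool set))" using fE by simp
        ultimately show ?thesis by (rule finite_subset)
      qed
      have nzS: "WW b V' E ends vl \<noteq> 0" for vl using IH[OF fV' fE cV' dV'] by blast
      have tel: "S \<subseteq> H \<Longrightarrow> sect (real (card S) * al) (WW b V' E ends (vS {}) / WW b V' E ends (vS S))" for S
      proof -
        assume SH: "S \<subseteq> H"
        then have "finite S" using fH finite_subset by auto
        then show ?thesis using SH
        proof (induction S rule: finite_induct)
          case empty
          then show ?case using nzS[of "vS {}"] sect_one[of 0] by simp
        next
          case (insert h S)
          obtain e s where h: "h = (e, s)" by (cases h)
          have eE: "e \<in> E" and hu: "endp ends (e,s) = u" using insert.prems h unfolding H_def by auto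
          have v1: "vS (insert h S) = (vS S)((e,s) := 1)" using h hu unfolding vS_def by auto
          have v0: "vS S = (vS S)((e,s) := 0)" using h hu insert.hyps(2) unfolding vS_def by auto
          have st: "sect al (WW b V' E ends ((vS S)((e,s):=0)) / WW b V' E ends ((vS S)((e,s):=1)))"
          proof -
            have hV': "endp ends (e,s) \<notin> V'" using hu uV' by simp
            show ?thesis by (rule step[OF IH fV' fE cV' dV' eE hV'])
          qed
          have ih: "sect (real (card S) * al) (WW b V' E ends (vS {}) / WW b V' E ends (vS S))"
            using insert by simp
          have st': "sect al (WW b V' E ends (vS S) / WW b V' E ends (vS (insert h S)))"
            using st unfolding v0[symmetric] v1[symmetric] .
          have eqr: "WW b V' E ends (vS {}) / WW b V' E ends (vS (insert h S)) =
             (WW b V' E ends (vS {}) / WW b V' E ends (vS S)) * (WW b V' E ends (vS S) / WW b V' E ends (vS (insert h S)))"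
            using nzS[of "vS S"] by simp
          have cc: "real (card (insert h S)) * al = real (card S) * al + al"
            using insert.hyps by (simp add: algebra_simps)
          show ?case using sect_mult[OF ih st'] unfolding eqr[symmetric] cc[symmetric] .
        qed
      qed
      have "sect (real (card H) * al) (WW b V' E ends (vS {}) / WW b V' E ends (vS H))"
        by (rule tel) simp
      moreover have "card H = degree E ends u" unfolding H_def by (rule card_H[OF fE])
      moreover have "vS {} = upd ends val u 0" unfolding vS_def upd_def by auto
      moreover have "WW b V' E ends (vS H) = WW b V' E ends (upd ends val u 1)"
        by (rule WW_cong) (auto simp: vS_def upd_def H_def)
      ultimately show ?thesis using nzS unfolding V'_def by simp
    qed
    have part1: "WW b V E ends val \<noteq> 0"
    proof (cases "V = {}")
      case True
      then show ?thesis using WW_empty[OF fE b_nz] by simp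
    next
      case False
      then obtain u where uV: "u \<in> V" by auto
      define Y0 where "Y0 = WW b (V - {u}) E ends (upd ends val u 0)"
      define Y1 where "Y1 = WW b (V - {u}) E ends (upd ends val u 1)"
      have p: "Y1 \<noteq> 0" "sect (real (degree E ends u) * al) (Y0 / Y1)"
        using part2[OF uV] unfolding Y0_def Y1_def by auto
      have "real (degree E ends u) * al \<le> real D * al" using dV uV al_pos by (simp add: mult_right_mono)
      then have "real (degree E ends u) * al < pi" using al_D by linarith
      then have "1 + Y0 / Y1 \<noteq> 0" using sect_plus1 p by blast
      moreover have "WW b V E ends val = Y1 * (1 + Y0 / Y1)"
      proof -
        have "WW b V E ends val = Y0 + Y1" unfolding Y0_def Y1_def by (rule WW_split[OF fV uV])
        also have "\<dots> = Y1 * (1 + Y0 / Y1)" using p(1) by (simp add: field_simps)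
        finally show ?thesis .
      qed
      ultimately show ?thesis using p by simp
    qed
    show "WW b V E ends val \<noteq> 0 \<and> (\<forall>u\<in>V. WW b (V - {u}) E ends (upd ends val u 1) \<noteq> 0 \<and>
        sect (real (degree E ends u) * al) (WW b (V - {u}) E ends (upd ends val u 0) / WW b (V - {u}) E ends (upd ends val u 1)))"
      using part1 part2 by blast
  qed
qed

lemma main:
  "finite V \<Longrightarrow> finite E \<Longrightarrow> (\<forall>x\<in>V. degree E ends x \<le> D) \<Longrightarrow> WW b V E ends val \<noteq> 0"
  using main_n by blast

end

lemma Z_WW:
  assumes "is_multigraph V E ends"
  shows "Z_Ising V E ends b = WW b V E ends val"
  unfolding Z_Ising_def WW_def mono_edges_def
proof (rule sum.cong[OF refl])
  fix \<sigma> :: "'a \<Rightarrow> nat"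
  have fE: "finite E" using assms by (simp add: is_multigraph_def)
  have "(\<Prod>e\<in>E. wt b (spin V ends val \<sigma> (e, True)) (spin V ends val \<sigma> (e, False)))
      = (\<Prod>e\<in>E. if \<sigma> (fst (ends e)) = \<sigma> (snd (ends e)) then b else 1)"
    using assms by (intro prod.cong refl) (auto simp: is_multigraph_def spin_def endp_def wt_def)
  also have "\<dots> = (\<Prod>e\<in>{e\<in>E. \<sigma> (fst (ends e)) = \<sigma> (snd (ends e))}. b)"
    by (rule prod.inter_filter[OF fE, symmetric])
  finally show "b ^ card {e \<in> E. \<sigma> (fst (ends e)) = \<sigma> (snd (ends e))} =
      (\<Prod>e\<in>E. wt b (spin V ends val \<sigma> (e, True)) (spin V ends val \<sigma> (e, False)))" by simp
qed

theorem theorem1p1: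
  fixes \<Delta> :: nat and V :: "'v set" and E :: "'e set" and ends :: "'e \<Rightarrow> 'v \<times> 'v"
    and \<beta> :: complex
  assumes "\<Delta> \<ge> 3"
    and "is_multigraph V E ends"
    and "\<forall>v\<in>V. degree E ends v \<le> \<Delta>"
    and "\<beta> \<noteq> -1"
    and "cmod (\<beta> - 1) / cmod (\<beta> + 1) \<le> tan (pi / (4 * (real \<Delta> - 1)))"
  shows "Z_Ising V E ends \<beta> \<noteq> 0"
proof -
  define al where "al = pi / (2 * (real \<Delta> - 1))"
  define t where "t = (\<beta> - 1) / (\<beta> + 1)"
  have b1: "\<beta> + 1 \<noteq> 0"
  proof
    assume "\<beta> + 1 = 0"
    then show False using assms(4) by (metis add_diff_cancel_right' diff_0)
  qed
  have h: "al / 2 = pi / (4 * (real \<Delta> - 1))" unfolding al_def by simp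
  have ct: "cmod t = cmod (\<beta> - 1) / cmod (\<beta> + 1)" unfolding t_def by (simp add: norm_divide)
  have tle: "cmod t \<le> tan (al / 2)" unfolding ct h by (rule assms(5))
  have bt: "\<beta> = (1 + t) / (1 - t)"
  proof -
    have "1 - t = 2 / (\<beta> + 1)" "1 + t = 2 * \<beta> / (\<beta> + 1)" unfolding t_def using b1 by (simp_all add: field_simps)
    then show ?thesis using b1 by simp
  qed
  have fin: "finite V" "finite E" using assms(2) by (auto simp: is_multigraph_def)
  have "WW \<beta> V E ends (\<lambda>_. 0) \<noteq> 0"
    by (rule main[OF assms(1) al_def tle bt fin assms(3)])
  then show ?thesis using Z_WW[OF assms(2)] by simp
qed

end
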